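(* Let $d,n\ge 1$, let $\mathbf{x}_1,\ldots,\mathbf{x}_n\in\mathbb{R}^d$ (column vectors), $y_1,\ldots,y_n\in\mathbb{R}$, $\eta>0$, and $\mathbf{w}^{(0)}\in\mathbb{R}^{1\times d}$ arbitrary. Consider the linear self-attention layer acting on a sequence $(\mathbf{z}_1,\ldots,\mathbf{z}_n)$ of vectors in $\mathbb{R}^{d+1}$ by $$\mathbf{z}_j\leftarrow \mathbf{z}_j+\mathbf{P}\mathbf{V}\sum_{i=1}^n \mathbf{z}_i\left(\mathbf{z}_i^\top\mathbf{K}^\top\mathbf{Q}\mathbf{z}_j\right),\qquad j=1,\ldots,n,$$ with parameters $$\mathbf{K}=\mathbf{Q}=\begin{pmatrix}\mathbf{I}_{d\times d}&\mathbf{0}\\ 0&0\end{pmatrix},\quad \mathbf{V}=\begin{pmatrix}\mathbf{0}_{d\times d}&\mathbf{0}\\ \mathbf{w}^{(0)}&-1\end{pmatrix},\quad \mathbf{P}=\frac{\eta}{n}\mathbf{I}.$$ Apply $l$ such layers in succession (all with these same parameters) to the input $\mathbf{z}_j^{(0)}=(\mathbf{x}_j^\top,y_j)^\top$, $j=1,\ldots,n$, and denote by $\mathbf{z}_j^{(l)}$ the output of the $l$-th layer. Define $\mathbf{w}^{(l)}$ for $l\ge1$ by $$\mathbf{w}^{(l)}=\mathbf{w}^{(l-1)}+\frac{\eta}{n}\sum_{i=1}^n\left(y_i-\mathbf{w}^{(l-1)}\mathbf{x}_i\right)\mathbf{x}_i^\top.$$ Then for every $l\ge 0$ and every $j$,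 $\mathbf{z}_j^{(l)}=(\mathbf{x}_j^\top,\delta_j^{(l)})^\top$ where $\delta_j^{(l)}=y_j-(\mathbf{w}^{(l)}-\mathbf{w}^{(0)})\mathbf{x}_j$.
   Context: Weight vectors are $1\times d$ row vectors and inputs are $d\times 1$ column vectors, so $\mathbf{w}\mathbf{x}_i$ is a scalar. The recursion for $\mathbf{w}^{(l)}$ is gradient descent with step size $\eta$, started at $\mathbf{w}^{(0)}$, on the least-squares loss $\frac{1}{2n}\sum_{i=1}^n(\mathbf{w}\mathbf{x}_i-y_i)^2$. *)

theory Defs
  imports "HOL-Analysis.Analysis"
begin

text \<open>R^(d+1) is modelled as real^('d + unit): indices Inl k (k in 'd) are the first d
  coordinates, Inr () is the last coordinate.\<close>

definition stack :: "real^'d \<Rightarrow> real \<Rightarrow> real^('d::finite + unit)" where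
  "stack x t = (\<chi> i. case i of Inl k \<Rightarrow> x $ k | Inr _ \<Rightarrow> t)"

definition KQ_mat :: "real^('d::finite + unit)^('d + unit)" where
  "KQ_mat = (\<chi> i j. if i = j \<and> (\<exists>k. i = Inl k) then 1 else 0)"

definition V_mat :: "real^'d \<Rightarrow> real^('d::finite + unit)^('d + unit)" where
  "V_mat w0 = (\<chi> i j. case i of Inl _ \<Rightarrow> 0
                    | Inr _ \<Rightarrow> (case j of Inl k \<Rightarrow> w0 $ k | Inr _ \<Rightarrow> -1))"

definition P_mat :: "real \<Rightarrow> nat \<Rightarrow> real^'m^'m" where
  "P_mat \<eta> n = (\<eta> / real n) *\<^sub>R mat 1"

definition lsa_layer ::
  "real^'m^'m \<Rightarrow> real^'m^'m \<Rightarrow> real^'m^'m \<Rightarrow> real^'m^'m \<Rightarrow> nat \<Rightarrow>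
   (nat \<Rightarrow> real^'m) \<Rightarrow> (nat \<Rightarrow> real^'m)" where
  "lsa_layer K Q V P n z = (\<lambda>j. z j + (P ** V) *v
      (\<Sum>i\<in>{1..n}. (z i \<bullet> ((transpose K ** Q) *v z j)) *\<^sub>R z i))"

text \<open>Gradient descent iterates; the row vector w is represented by real^'d and
  w x is the inner product w \<bullet> x.\<close>
primrec gd_iter :: "real^'d \<Rightarrow> real \<Rightarrow> nat \<Rightarrow> (nat \<Rightarrow> real^'d) \<Rightarrow> (nat \<Rightarrow> real) \<Rightarrow> nat \<Rightarrow> real^'d" where
  "gd_iter w0 \<eta> n x y 0 = w0"
| "gd_iter w0 \<eta> n x y (Suc l) =
     gd_iter w0 \<eta> n x y l +
       (\<eta> / real n) *\<^sub>R (\<Sum>i\<in>{1..n}. (y i - gd_iter w0 \<eta> n x y l \<bullet> x i) *\<^sub>R x i)"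

end

theory Submission
  imports Defs
begin

lemma sum_UNIV_plus_unit:
  fixes f :: "('d::finite + unit) \<Rightarrow> real"
  shows "(\<Sum>i\<in>UNIV. f i) = (\<Sum>k\<in>UNIV. f (Inl k)) + f (Inr ())"
proof -
  have "(UNIV :: ('d + unit) set) = UNIV <+> UNIV" by simp
  then have "(\<Sum>i\<in>UNIV. f i) = sum f (UNIV <+> UNIV)" by simp
  also have "\<dots> = sum (f \<circ> Inl) UNIV + sum (f \<circ> Inr) (UNIV::unit set)"
    by (rule sum.Plus) auto
  also have "(UNIV::unit set) = {()}" by auto
  finally show ?thesis by simp
qed

lemma ifmult: "(if P then (1::real) else 0) * c = (if P then c else 0)"
  "c * (if P then (1::real) else 0) = (if P then c else 0)"
  by auto

lemma stack_comp_Inl[simp]: "stack a t $ Inl k = a $ k"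
  by (simp add: stack_def)
lemma stack_comp_Inr[simp]: "stack a t $ Inr u = t"
  by (simp add: stack_def)

lemma inner_stack: "stack a s \<bullet> stack b t = a \<bullet> b + s * t"
  by (simp add: inner_vec_def sum_UNIV_plus_unit)

lemma KQ_entries:
  "(KQ_mat :: real^('d::finite + unit)^('d + unit)) $ Inl a $ Inl b = (if a = b then 1 else 0)"
  "(KQ_mat :: real^('d::finite + unit)^('d + unit)) $ Inl a $ Inr u = 0"
  "(KQ_mat :: real^('d::finite + unit)^('d + unit)) $ Inr u $ j = 0"
  by (auto simp: KQ_mat_def)

lemma KK_eq: "transpose KQ_mat ** KQ_mat = (KQ_mat :: real^('d::finite + unit)^('d + unit))"
proof -
  have "(transpose KQ_mat ** KQ_mat :: real^('d + unit)^('d + unit)) $ i $ j = KQ_mat $ i $ j" for i j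
    by (cases i; cases j) (simp_all add: matrix_matrix_mult_def transpose_def
        sum_UNIV_plus_unit KQ_entries ifmult)
  then show ?thesis by (simp add: vec_eq_iff)
qed

lemma KQ_mult: "(KQ_mat :: real^('d::finite + unit)^('d + unit)) *v v = stack (\<chi> k. v $ Inl k) 0"
proof -
  have "((KQ_mat :: real^('d + unit)^('d + unit)) *v v) $ i = stack (\<chi> k. v $ Inl k) 0 $ i" for i
    by (cases i) (simp_all add: matrix_vector_mult_def
        sum_UNIV_plus_unit KQ_entries ifmult)
  then show ?thesis by (simp add: vec_eq_iff)
qed

lemma PV_mult: "(P_mat \<eta> n ** V_mat w0) *v (v :: real^('d::finite + unit))
   = stack 0 ((\<eta> / real n) * (w0 \<bullet> (\<chi> k. v $ Inl k) - v $ Inr ()))"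
proof -
  have "(P_mat \<eta> n ** V_mat w0) *v v = (\<eta> / real n) *\<^sub>R (V_mat w0 *v v)"
    by (simp add: matrix_vector_mul_assoc[symmetric] P_mat_def scaleR_matrix_vector_assoc[symmetric])
  moreover have "V_mat w0 *v v = stack 0 (w0 \<bullet> (\<chi> k. v $ Inl k) - v $ Inr ())"
  proof -
    have "(V_mat w0 *v v) $ i = stack 0 (w0 \<bullet> (\<chi> k. v $ Inl k) - v $ Inr ()) $ i" for i
      by (cases i) (auto simp: matrix_vector_mult_def V_mat_def sum_UNIV_plus_unit inner_vec_def mult.commute)
    then show ?thesis by (simp add: vec_eq_iff)
  qed
  moreover have "c *\<^sub>R stack 0 t = stack 0 (c * t)" for c t
    by (simp add: vec_eq_iff stack_def split: sum.splits)
  ultimately show ?thesis by (simp only:)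
qed

lemma sum_stack: "(\<Sum>i\<in>A. c i *\<^sub>R stack (a i) (t i))
   = stack (\<Sum>i\<in>A. c i *\<^sub>R a i) (\<Sum>i\<in>A. c i * t i)"
  apply (simp add: vec_eq_iff sum_component)
  apply (intro allI)
  subgoal for i by (cases i) (auto simp: sum_component)
  done

lemma add_stack: "stack a s + stack b t = stack (a + b) (s + t)"
  by (simp add: vec_eq_iff stack_def split: sum.splits)

lemma step:
  fixes x :: "nat \<Rightarrow> real^'d::finite" and w :: "real^'d"
  shows "lsa_layer KQ_mat KQ_mat (V_mat w0) (P_mat \<eta> n) n
      (\<lambda>j. stack (x j) (y j - (w - w0) \<bullet> x j))
    = (\<lambda>j. stack (x j) (y j - (w + (\<eta> / real n) *\<^sub>R (\<Sum>i\<in>{1..n}. (y i - w \<bullet> x i) *\<^sub>R x i) - w0) \<bullet> x j))"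
proof
  fix j
  have chi: "(\<chi> k. stack a t $ Inl k) = a" for a :: "real^'d" and t
    by (simp add: vec_eq_iff)
  let ?S = "\<Sum>i\<in>{1..n}. (x i \<bullet> x j) *\<^sub>R x i"
  let ?T = "\<Sum>i\<in>{1..n}. (x i \<bullet> x j) * (y i - (w - w0) \<bullet> x i)"
  have "lsa_layer KQ_mat KQ_mat (V_mat w0) (P_mat \<eta> n) n
      (\<lambda>j. stack (x j) (y j - (w - w0) \<bullet> x j)) j
     = stack (x j) (y j - (w - w0) \<bullet> x j) + stack 0 ((\<eta> / real n) * (w0 \<bullet> ?S - ?T))"
  proof -
    have e: "(\<Sum>i\<in>{1..n}. (stack (x i) (y i - (w - w0) \<bullet> x i) \<bullet> stack (x j) 0) *\<^sub>R stack (x i) (y i - (w - w0) \<bullet> x i))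
       = stack ?S ?T"
      by (simp add: inner_stack sum_stack)
    show ?thesis
      unfolding lsa_layer_def KK_eq KQ_mult chi e PV_mult by simp
  qed
  also have "\<dots> = stack (x j) (y j - (w - w0) \<bullet> x j + (\<eta> / real n) * (w0 \<bullet> ?S - ?T))"
    by (simp add: add_stack)
  also have "(w0 \<bullet> ?S - ?T) = - ((\<Sum>i\<in>{1..n}. (y i - w \<bullet> x i) *\<^sub>R x i) \<bullet> x j)"
    by (simp add: inner_sum_left inner_sum_right sum_subtractf[symmetric] sum_negf[symmetric]
        algebra_simps inner_commute)
  finally show "lsa_layer KQ_mat KQ_mat (V_mat w0) (P_mat \<eta> n) n
      (\<lambda>j. stack (x j) (y j - (w - w0) \<bullet> x j)) j =
    stack (x j) (y j - (w + (\<eta> / real n) *\<^sub>R (\<Sum>i\<in>{1..n}. (y i - w \<bullet> x i) *\<^sub>R x i) - w0) \<bullet> x j)"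
    by (simp add: algebra_simps)
qed

lemma main:
  fixes x :: "nat \<Rightarrow> real^'d::finite"
  shows "((lsa_layer KQ_mat KQ_mat (V_mat w0) (P_mat \<eta> n) n) ^^ l)
            (\<lambda>i. stack (x i) (y i))
         = (\<lambda>j. stack (x j) (y j - (gd_iter w0 \<eta> n x y l - w0) \<bullet> x j))"
proof (induction l)
  case 0
  then show ?case by simp
next
  case (Suc l)
  then show ?case by (simp add: step)
qed

theorem proposition6:
  fixes n :: nat and x :: "nat \<Rightarrow> real^'d::finite" and y :: "nat \<Rightarrow> real"
    and \<eta> :: real and w0 :: "real^'d" and l j :: nat
  assumes "n \<ge> 1" and "\<eta> > 0" and "j \<in> {1..n}"
  shows "((lsa_layer KQ_mat KQ_mat (V_mat w0) (P_mat \<eta> n) n) ^^ l)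
            (\<lambda>i. stack (x i) (y i)) j
         = stack (x j) (y j - (gd_iter w0 \<eta> n x y l - w0) \<bullet> x j)"
  by (simp add: main)

end
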